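(* Let $$D_6=\begin{bmatrix}1&1&1&1&1&1\\1&-1&\mathrm{i}&-\mathrm{i}&-\mathrm{i}&\mathrm{i}\\1&\mathrm{i}&-1&\mathrm{i}&-\mathrm{i}&-\mathrm{i}\\1&-\mathrm{i}&\mathrm{i}&-1&\mathrm{i}&-\mathrm{i}\\1&-\mathrm{i}&-\mathrm{i}&\mathrm{i}&-1&\mathrm{i}\\1&\mathrm{i}&-\mathrm{i}&-\mathrm{i}&\mathrm{i}&-1\end{bmatrix},$$ and for $c\in\mathbb{R}$ let $R(c)\in M^{6\times 6}(\mathbb{R})$ be the matrix with $[R(c)]_{3,4}=[R(c)]_{3,5}=[R(c)]_{6,4}=[R(c)]_{6,5}=c$, $[R(c)]_{4,3}=[R(c)]_{4,6}=[R(c)]_{5,3}=[R(c)]_{5,6}=-c$, and all other entries $0$. Let $D_6^{(1)}(c)=D_6\circ \mathrm{EXP}(\mathrm{i}R(c))$, which is a complex Hadamard matrix for every $c\in\mathbb{R}$. Then $d\big(D_6^{(1)}(c)\big)=4$ for every $c\in\mathbb{R}$.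
   Context: $\circ$ denotes the entrywise (Hadamard) product and $[\mathrm{EXP}(\mathrm{i}R)]_{j,k}=e^{\mathrm{i}[R]_{j,k}}$. A complex Hadamard matrix of order $d$ is $H\in M^{d\times d}(\mathbb{C})$ with all entries of modulus $1$ and $HH^*=dI_d$. The defect $d(H)$ of a $d\times d$ complex Hadamard matrix $H$ is the dimension of the real vector space of matrices $R\in M^{d\times d}(\mathbb{R})$ satisfying: $[R]_{i,1}=0$ for $1\le i\le d$; $[R]_{1,j}=0$ for $2\le j\le d$; and $\sum_{k=1}^d [H]_{i,k}\overline{[H]_{j,k}}\big([R]_{i,k}-[R]_{j,k}\big)=0$ for all $1\le i<j\le d$. *)

theory Defs
  imports "HOL-Analysis.Analysis" "HOL-Library.Numeral_Type"
begin

text \<open>Square matrices of order d are rendered as elements of \<open>'a^'n^'n\<close> with a finite,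
  well-ordered index type \<open>'n\<close> of cardinality d; row/column 1 of the paper is the least index.\<close>

definition first_idx :: "'n::{finite,wellorder}" where
  "first_idx = (LEAST k. True)"

definition conj_transpose :: "complex^'n^'m \<Rightarrow> complex^'m^'n" where
  "conj_transpose H = (\<chi> i j. cnj (H $ j $ i))"

definition complex_hadamard :: "complex^'n^'n \<Rightarrow> bool" where
  "complex_hadamard H \<longleftrightarrow> (\<forall>i j. cmod (H $ i $ j) = 1) \<and>
     H ** conj_transpose H = mat (of_nat CARD('n))"

definition hadamard_prod :: "'a::times^'n^'m \<Rightarrow> 'a^'n^'m \<Rightarrow> 'a^'n^'m" (infixl "\<circ>\<^sub>H" 70) where
  "A \<circ>\<^sub>H B = (\<chi> i j. A $ i $ j * B $ i $ j)"

definition EXP_i :: "real^'n^'m \<Rightarrow> complex^'n^'m" where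
  "EXP_i R = (\<chi> i j. exp (\<i> * complex_of_real (R $ i $ j)))"

definition defect :: "((complex, 'n::{finite,wellorder}) vec, 'n) vec \<Rightarrow> nat" where
  "defect H = dim {R :: ((real, 'n) vec, 'n) vec.
      (\<forall>i. R $ i $ first_idx = 0) \<and>
      (\<forall>j. j \<noteq> first_idx \<longrightarrow> R $ first_idx $ j = 0) \<and>
      (\<forall>i j. i < j \<longrightarrow>
         (\<Sum>k\<in>UNIV. H $ i $ k * cnj (H $ j $ k) * complex_of_real (R $ i $ k - R $ j $ k)) = 0)}"

text \<open>Concrete 6x6 matrices, built from 1-based index functions as in the paper.
  The index type \<open>6\<close> has elements with representatives 0..5; \<open>pos6 i\<close> is the paper's index 1..6.\<close>
definition pos6 :: "6 \<Rightarrow> nat" where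
  "pos6 i = nat (Rep_bit0 i) + 1"

definition mat6 :: "(nat \<Rightarrow> nat \<Rightarrow> 'a) \<Rightarrow> 'a^6^6" where
  "mat6 f = (\<chi> i j. f (pos6 i) (pos6 j))"

definition D6_entries :: "nat \<Rightarrow> nat \<Rightarrow> complex" where
  "D6_entries i j =
     [[1,  1,  1,  1,  1,  1],
      [1, -1,  \<i>, -\<i>, -\<i>,  \<i>],
      [1,  \<i>, -1,  \<i>, -\<i>, -\<i>],
      [1, -\<i>,  \<i>, -1,  \<i>, -\<i>],
      [1, -\<i>, -\<i>,  \<i>, -1,  \<i>],
      [1,  \<i>, -\<i>, -\<i>,  \<i>, -1]] ! (i - 1) ! (j - 1)"

definition D6 :: "complex^6^6" where
  "D6 = mat6 D6_entries"

definition R_entries :: "real \<Rightarrow> nat \<Rightarrow> nat \<Rightarrow> real" where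
  "R_entries c i j =
     (if (i, j) \<in> {(3,4), (3,5), (6,4), (6,5)} then c
      else if (i, j) \<in> {(4,3), (4,6), (5,3), (5,6)} then - c
      else 0)"

definition Rc :: "real \<Rightarrow> real^6^6" where
  "Rc c = mat6 (R_entries c)"

definition D6_1 :: "real \<Rightarrow> complex^6^6" where
  "D6_1 c = D6 \<circ>\<^sub>H EXP_i (Rc c)"

end

theory Submission
  imports Defs
begin

lemma pos6_simps: "pos6 0 = 1" "pos6 1 = 2" "pos6 2 = 3" "pos6 3 = 4" "pos6 4 = 5" "pos6 5 = 6"
  by (simp_all add: pos6_def bit0.Rep_numeral bit0.Rep_0 bit0.Rep_1)
lemma H_gen: "D6_1 c $ i $ j = D6_entries (pos6 i) (pos6 j) * exp (\<i> * complex_of_real (R_entries c (pos6 i) (pos6 j)))"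
  by (simp add: D6_1_def hadamard_prod_def EXP_i_def D6_def Rc_def mat6_def)
lemma H_entries:
  "Re (D6_1 c $ 0 $ 0) = 1"
  "Re (D6_1 c $ 0 $ 1) = 1"
  "Re (D6_1 c $ 0 $ 2) = 1"
  "Re (D6_1 c $ 0 $ 3) = 1"
  "Re (D6_1 c $ 0 $ 4) = 1"
  "Re (D6_1 c $ 0 $ 5) = 1"
  "Re (D6_1 c $ 1 $ 0) = 1"
  "Re (D6_1 c $ 1 $ 1) = - 1"
  "Re (D6_1 c $ 1 $ 2) = 0"
  "Re (D6_1 c $ 1 $ 3) = 0"
  "Re (D6_1 c $ 1 $ 4) = 0"
  "Re (D6_1 c $ 1 $ 5) = 0"
  "Re (D6_1 c $ 2 $ 0) = 1"
  "Re (D6_1 c $ 2 $ 1) = 0"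
  "Re (D6_1 c $ 2 $ 2) = - 1"
  "Re (D6_1 c $ 2 $ 3) = - sin c"
  "Re (D6_1 c $ 2 $ 4) = sin c"
  "Re (D6_1 c $ 2 $ 5) = 0"
  "Re (D6_1 c $ 3 $ 0) = 1"
  "Re (D6_1 c $ 3 $ 1) = 0"
  "Re (D6_1 c $ 3 $ 2) = sin c"
  "Re (D6_1 c $ 3 $ 3) = - 1"
  "Re (D6_1 c $ 3 $ 4) = 0"
  "Re (D6_1 c $ 3 $ 5) = - sin c"
  "Re (D6_1 c $ 4 $ 0) = 1"
  "Re (D6_1 c $ 4 $ 1) = 0"
  "Re (D6_1 c $ 4 $ 2) = - sin c"
  "Re (D6_1 c $ 4 $ 3) = 0"
  "Re (D6_1 c $ 4 $ 4) = - 1"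
  "Re (D6_1 c $ 4 $ 5) = sin c"
  "Re (D6_1 c $ 5 $ 0) = 1"
  "Re (D6_1 c $ 5 $ 1) = 0"
  "Re (D6_1 c $ 5 $ 2) = 0"
  "Re (D6_1 c $ 5 $ 3) = sin c"
  "Re (D6_1 c $ 5 $ 4) = - sin c"
  "Re (D6_1 c $ 5 $ 5) = - 1"
  "Im (D6_1 c $ 0 $ 0) = 0"
  "Im (D6_1 c $ 0 $ 1) = 0"
  "Im (D6_1 c $ 0 $ 2) = 0"
  "Im (D6_1 c $ 0 $ 3) = 0"
  "Im (D6_1 c $ 0 $ 4) = 0"
  "Im (D6_1 c $ 0 $ 5) = 0"
  "Im (D6_1 c $ 1 $ 0) = 0"
  "Im (D6_1 c $ 1 $ 1) = 0"
  "Im (D6_1 c $ 1 $ 2) = 1"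
  "Im (D6_1 c $ 1 $ 3) = - 1"
  "Im (D6_1 c $ 1 $ 4) = - 1"
  "Im (D6_1 c $ 1 $ 5) = 1"
  "Im (D6_1 c $ 2 $ 0) = 0"
  "Im (D6_1 c $ 2 $ 1) = 1"
  "Im (D6_1 c $ 2 $ 2) = 0"
  "Im (D6_1 c $ 2 $ 3) = cos c"
  "Im (D6_1 c $ 2 $ 4) = - cos c"
  "Im (D6_1 c $ 2 $ 5) = - 1"
  "Im (D6_1 c $ 3 $ 0) = 0"
  "Im (D6_1 c $ 3 $ 1) = - 1"
  "Im (D6_1 c $ 3 $ 2) = cos c"
  "Im (D6_1 c $ 3 $ 3) = 0"
  "Im (D6_1 c $ 3 $ 4) = 1"
  "Im (D6_1 c $ 3 $ 5) = - cos c"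
  "Im (D6_1 c $ 4 $ 0) = 0"
  "Im (D6_1 c $ 4 $ 1) = - 1"
  "Im (D6_1 c $ 4 $ 2) = - cos c"
  "Im (D6_1 c $ 4 $ 3) = 1"
  "Im (D6_1 c $ 4 $ 4) = 0"
  "Im (D6_1 c $ 4 $ 5) = cos c"
  "Im (D6_1 c $ 5 $ 0) = 0"
  "Im (D6_1 c $ 5 $ 1) = 1"
  "Im (D6_1 c $ 5 $ 2) = - 1"
  "Im (D6_1 c $ 5 $ 3) = - cos c"
  "Im (D6_1 c $ 5 $ 4) = cos c"
  "Im (D6_1 c $ 5 $ 5) = 0"
  by (simp_all add: H_gen pos6_simps D6_entries_def R_entries_def Re_exp Im_exp)

lemma UNIV6: "(UNIV::6 set) = {0,1,2,3,4,5}"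
proof -
  have a: "{0,1,2,3,4,5} \<subseteq> (UNIV::6 set)" by simp
  have b: "card ({0,1,2,3,4,5}::6 set) = card (UNIV::6 set)" by simp
  show ?thesis using card_subset_eq[OF finite_class.finite_UNIV a b] by simp
qed
lemma sum6: "sum f (UNIV::6 set) = f 0 + f 1 + f 2 + f 3 + f 4 + f 5"
  proof -
  have d: "(0::6) \<notin> {1,2,3,4,5}" "(1::6) \<notin> {2,3,4,5}" "(2::6) \<notin> {3,4,5}" "(3::6) \<notin> {4,5}" "(4::6) \<notin> {5}"
    by simp_all
  show ?thesis unfolding UNIV6 using d apply (subst sum.insert[OF _ d(1)], simp)
  apply (subst sum.insert[OF _ d(2)], simp)
  apply (subst sum.insert[OF _ d(3)], simp)
  apply (subst sum.insert[OF _ d(4)], simp)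
  apply (subst sum.insert[OF _ d(5)], simp)
  by (simp add: add.assoc)
qed

lemma all6: "(\<forall>i::6. P i) \<longleftrightarrow> P 0 \<and> P 1 \<and> P 2 \<and> P 3 \<and> P 4 \<and> P 5"
proof -
  have "(\<forall>i::6. P i) = (\<forall>i\<in>UNIV. P i)" by simp
  also have "\<dots> = (P 0 \<and> P 1 \<and> P 2 \<and> P 3 \<and> P 4 \<and> P 5)" unfolding UNIV6 by simp
  finally show ?thesis .
qed
lemma first6: "(first_idx::6) = 0"
  unfolding first_idx_def 
  apply (rule Least_equality) 
  using Rep_bit0 by (auto simp: less_eq_bit0_def bit0.Rep_0)
lemma eqRe: "z = 0 \<Longrightarrow> Re z = 0" by simp
lemma eqIm: "z = 0 \<Longrightarrow> Im z = 0" by simp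
lemma l01: "(0::6) < 1" by (simp add: less_bit0_def bit0.Rep_numeral bit0.Rep_0 bit0.Rep_1)
lemma l02: "(0::6) < 2" by (simp add: less_bit0_def bit0.Rep_numeral bit0.Rep_0 bit0.Rep_1)
lemma l03: "(0::6) < 3" by (simp add: less_bit0_def bit0.Rep_numeral bit0.Rep_0 bit0.Rep_1)
lemma l04: "(0::6) < 4" by (simp add: less_bit0_def bit0.Rep_numeral bit0.Rep_0 bit0.Rep_1)
lemma l05: "(0::6) < 5" by (simp add: less_bit0_def bit0.Rep_numeral bit0.Rep_0 bit0.Rep_1)
lemma l12: "(1::6) < 2" by (simp add: less_bit0_def bit0.Rep_numeral bit0.Rep_0 bit0.Rep_1)
lemma l13: "(1::6) < 3" by (simp add: less_bit0_def bit0.Rep_numeral bit0.Rep_0 bit0.Rep_1)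
lemma l14: "(1::6) < 4" by (simp add: less_bit0_def bit0.Rep_numeral bit0.Rep_0 bit0.Rep_1)
lemma l15: "(1::6) < 5" by (simp add: less_bit0_def bit0.Rep_numeral bit0.Rep_0 bit0.Rep_1)
lemma l23: "(2::6) < 3" by (simp add: less_bit0_def bit0.Rep_numeral bit0.Rep_0 bit0.Rep_1)
lemma l24: "(2::6) < 4" by (simp add: less_bit0_def bit0.Rep_numeral bit0.Rep_0 bit0.Rep_1)
lemma l25: "(2::6) < 5" by (simp add: less_bit0_def bit0.Rep_numeral bit0.Rep_0 bit0.Rep_1)
lemma l34: "(3::6) < 4" by (simp add: less_bit0_def bit0.Rep_numeral bit0.Rep_0 bit0.Rep_1)
lemma l35: "(3::6) < 5" by (simp add: less_bit0_def bit0.Rep_numeral bit0.Rep_0 bit0.Rep_1)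
lemma l45: "(4::6) < 5" by (simp add: less_bit0_def bit0.Rep_numeral bit0.Rep_0 bit0.Rep_1)



definition W0 :: "real^6^6" where
  "W0 = mat6 (\<lambda>i j. ([[0, 0, 0, 0, 0, 0],
     [0, 0, 0, 0, 0, 0],
     [0, 0, 0, (1), (1), 0],
     [0, 0, (- 1), 0, 0, (- 1)],
     [0, 0, (- 1), 0, 0, (- 1)],
     [0, 0, 0, (1), (1), 0]]) ! (i - 1) ! (j - 1))"

definition Wu2 :: "real \<Rightarrow> real^6^6" where
  "Wu2 c = mat6 (\<lambda>i j. ([[0, 0, 0, 0, 0, 0],
     [0, 0, (- 1 / 2 + cos c / 2 - sin c / 2), (1 / 2 + cos c / 2 - sin c / 2), (- 1 / 2 + cos c / 2 - sin c / 2), (1 / 2 + cos c / 2 - sin c / 2)],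
     [0, (1 / 2 - cos c / 2 - sin c / 2), (- sin c), 0, (- 1), (1 / 2 + cos c / 2 - sin c / 2)],
     [0, (- 1 / 2 - cos c / 2 - sin c / 2), (- sin c), (- sin c), (- 1 / 2 + cos c / 2 - sin c / 2), (1 - sin c)],
     [0, (1 / 2 - cos c / 2 - sin c / 2), (1 - sin c), (1 / 2 - cos c / 2 - sin c / 2), 0, (1 - sin c)],
     [0, (- 1 / 2 - cos c / 2 - sin c / 2), (- 1 / 2 - cos c / 2 - sin c / 2), (- 1), (- 1), 0]]) ! (i - 1) ! (j - 1))"

definition Wu5 :: "real \<Rightarrow> real^6^6" where
  "Wu5 c = mat6 (\<lambda>i j. ([[0, 0, 0, 0, 0, 0],
     [0, 0, (1 / 2 - cos c / 2 + sin c / 2), (1 / 2 - cos c / 2 + sin c / 2), (- 1 / 2 - cos c / 2 + sin c / 2), (- 1 / 2 - cos c / 2 + sin c / 2)],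
     [0, (- 1 / 2 + cos c / 2 + sin c / 2), 0, 0, 0, (- 1 / 2 + cos c / 2 + sin c / 2)],
     [0, (- 1 / 2 + cos c / 2 + sin c / 2), (sin c), (sin c), (- 1 / 2 - cos c / 2 + sin c / 2), (- 1 + sin c)],
     [0, (1 / 2 + cos c / 2 + sin c / 2), (sin c), (1 / 2 + cos c / 2 + sin c / 2), 0, (sin c)],
     [0, (1 / 2 + cos c / 2 + sin c / 2), (1 / 2 - cos c / 2 + sin c / 2), (1), 0, (sin c)]]) ! (i - 1) ! (j - 1))"

definition Wv4 :: "real \<Rightarrow> real^6^6" where
  "Wv4 c = mat6 (\<lambda>i j. ([[0, 0, 0, 0, 0, 0],
     [0, 0, (1), 0, 0, (- 1)],
     [0, (- 1), 0, 0, 0, (- 1)],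
     [0, 0, 0, (sin c), (- cos c), (- 1)],
     [0, 0, 0, (cos c), (- sin c), (- 1)],
     [0, (1), (1), (1), (1), 0]]) ! (i - 1) ! (j - 1))"

lemma W0_ent:
  "W0 $ 0 $ 0 = 0"
  "W0 $ 0 $ 1 = 0"
  "W0 $ 0 $ 2 = 0"
  "W0 $ 0 $ 3 = 0"
  "W0 $ 0 $ 4 = 0"
  "W0 $ 0 $ 5 = 0"
  "W0 $ 1 $ 0 = 0"
  "W0 $ 1 $ 1 = 0"
  "W0 $ 1 $ 2 = 0"
  "W0 $ 1 $ 3 = 0"
  "W0 $ 1 $ 4 = 0"
  "W0 $ 1 $ 5 = 0"
  "W0 $ 2 $ 0 = 0"
  "W0 $ 2 $ 1 = 0"
  "W0 $ 2 $ 2 = 0"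
  "W0 $ 2 $ 3 = 1"
  "W0 $ 2 $ 4 = 1"
  "W0 $ 2 $ 5 = 0"
  "W0 $ 3 $ 0 = 0"
  "W0 $ 3 $ 1 = 0"
  "W0 $ 3 $ 2 = - 1"
  "W0 $ 3 $ 3 = 0"
  "W0 $ 3 $ 4 = 0"
  "W0 $ 3 $ 5 = - 1"
  "W0 $ 4 $ 0 = 0"
  "W0 $ 4 $ 1 = 0"
  "W0 $ 4 $ 2 = - 1"
  "W0 $ 4 $ 3 = 0"
  "W0 $ 4 $ 4 = 0"
  "W0 $ 4 $ 5 = - 1"
  "W0 $ 5 $ 0 = 0"
  "W0 $ 5 $ 1 = 0"
  "W0 $ 5 $ 2 = 0"
  "W0 $ 5 $ 3 = 1"
  "W0 $ 5 $ 4 = 1"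
  "W0 $ 5 $ 5 = 0"
  by (simp_all add: W0_def mat6_def pos6_simps)

lemma Wu2_ent:
  "Wu2 c $ 0 $ 0 = 0"
  "Wu2 c $ 0 $ 1 = 0"
  "Wu2 c $ 0 $ 2 = 0"
  "Wu2 c $ 0 $ 3 = 0"
  "Wu2 c $ 0 $ 4 = 0"
  "Wu2 c $ 0 $ 5 = 0"
  "Wu2 c $ 1 $ 0 = 0"
  "Wu2 c $ 1 $ 1 = 0"
  "Wu2 c $ 1 $ 2 = - 1 / 2 + cos c / 2 - sin c / 2"
  "Wu2 c $ 1 $ 3 = 1 / 2 + cos c / 2 - sin c / 2"
  "Wu2 c $ 1 $ 4 = - 1 / 2 + cos c / 2 - sin c / 2"
  "Wu2 c $ 1 $ 5 = 1 / 2 + cos c / 2 - sin c / 2"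
  "Wu2 c $ 2 $ 0 = 0"
  "Wu2 c $ 2 $ 1 = 1 / 2 - cos c / 2 - sin c / 2"
  "Wu2 c $ 2 $ 2 = - sin c"
  "Wu2 c $ 2 $ 3 = 0"
  "Wu2 c $ 2 $ 4 = - 1"
  "Wu2 c $ 2 $ 5 = 1 / 2 + cos c / 2 - sin c / 2"
  "Wu2 c $ 3 $ 0 = 0"
  "Wu2 c $ 3 $ 1 = - 1 / 2 - cos c / 2 - sin c / 2"
  "Wu2 c $ 3 $ 2 = - sin c"
  "Wu2 c $ 3 $ 3 = - sin c"
  "Wu2 c $ 3 $ 4 = - 1 / 2 + cos c / 2 - sin c / 2"
  "Wu2 c $ 3 $ 5 = 1 - sin c"
  "Wu2 c $ 4 $ 0 = 0"
  "Wu2 c $ 4 $ 1 = 1 / 2 - cos c / 2 - sin c / 2"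
  "Wu2 c $ 4 $ 2 = 1 - sin c"
  "Wu2 c $ 4 $ 3 = 1 / 2 - cos c / 2 - sin c / 2"
  "Wu2 c $ 4 $ 4 = 0"
  "Wu2 c $ 4 $ 5 = 1 - sin c"
  "Wu2 c $ 5 $ 0 = 0"
  "Wu2 c $ 5 $ 1 = - 1 / 2 - cos c / 2 - sin c / 2"
  "Wu2 c $ 5 $ 2 = - 1 / 2 - cos c / 2 - sin c / 2"
  "Wu2 c $ 5 $ 3 = - 1"
  "Wu2 c $ 5 $ 4 = - 1"
  "Wu2 c $ 5 $ 5 = 0"
  by (simp_all add: Wu2_def mat6_def pos6_simps)

lemma Wu5_ent:
  "Wu5 c $ 0 $ 0 = 0"
  "Wu5 c $ 0 $ 1 = 0"
  "Wu5 c $ 0 $ 2 = 0"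
  "Wu5 c $ 0 $ 3 = 0"
  "Wu5 c $ 0 $ 4 = 0"
  "Wu5 c $ 0 $ 5 = 0"
  "Wu5 c $ 1 $ 0 = 0"
  "Wu5 c $ 1 $ 1 = 0"
  "Wu5 c $ 1 $ 2 = 1 / 2 - cos c / 2 + sin c / 2"
  "Wu5 c $ 1 $ 3 = 1 / 2 - cos c / 2 + sin c / 2"
  "Wu5 c $ 1 $ 4 = - 1 / 2 - cos c / 2 + sin c / 2"
  "Wu5 c $ 1 $ 5 = - 1 / 2 - cos c / 2 + sin c / 2"
  "Wu5 c $ 2 $ 0 = 0"
  "Wu5 c $ 2 $ 1 = - 1 / 2 + cos c / 2 + sin c / 2"
  "Wu5 c $ 2 $ 2 = 0"
  "Wu5 c $ 2 $ 3 = 0"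
  "Wu5 c $ 2 $ 4 = 0"
  "Wu5 c $ 2 $ 5 = - 1 / 2 + cos c / 2 + sin c / 2"
  "Wu5 c $ 3 $ 0 = 0"
  "Wu5 c $ 3 $ 1 = - 1 / 2 + cos c / 2 + sin c / 2"
  "Wu5 c $ 3 $ 2 = sin c"
  "Wu5 c $ 3 $ 3 = sin c"
  "Wu5 c $ 3 $ 4 = - 1 / 2 - cos c / 2 + sin c / 2"
  "Wu5 c $ 3 $ 5 = - 1 + sin c"
  "Wu5 c $ 4 $ 0 = 0"
  "Wu5 c $ 4 $ 1 = 1 / 2 + cos c / 2 + sin c / 2"
  "Wu5 c $ 4 $ 2 = sin c"
  "Wu5 c $ 4 $ 3 = 1 / 2 + cos c / 2 + sin c / 2"
  "Wu5 c $ 4 $ 4 = 0"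
  "Wu5 c $ 4 $ 5 = sin c"
  "Wu5 c $ 5 $ 0 = 0"
  "Wu5 c $ 5 $ 1 = 1 / 2 + cos c / 2 + sin c / 2"
  "Wu5 c $ 5 $ 2 = 1 / 2 - cos c / 2 + sin c / 2"
  "Wu5 c $ 5 $ 3 = 1"
  "Wu5 c $ 5 $ 4 = 0"
  "Wu5 c $ 5 $ 5 = sin c"
  by (simp_all add: Wu5_def mat6_def pos6_simps)

lemma Wv4_ent:
  "Wv4 c $ 0 $ 0 = 0"
  "Wv4 c $ 0 $ 1 = 0"
  "Wv4 c $ 0 $ 2 = 0"
  "Wv4 c $ 0 $ 3 = 0"
  "Wv4 c $ 0 $ 4 = 0"
  "Wv4 c $ 0 $ 5 = 0"
  "Wv4 c $ 1 $ 0 = 0"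
  "Wv4 c $ 1 $ 1 = 0"
  "Wv4 c $ 1 $ 2 = 1"
  "Wv4 c $ 1 $ 3 = 0"
  "Wv4 c $ 1 $ 4 = 0"
  "Wv4 c $ 1 $ 5 = - 1"
  "Wv4 c $ 2 $ 0 = 0"
  "Wv4 c $ 2 $ 1 = - 1"
  "Wv4 c $ 2 $ 2 = 0"
  "Wv4 c $ 2 $ 3 = 0"
  "Wv4 c $ 2 $ 4 = 0"
  "Wv4 c $ 2 $ 5 = - 1"
  "Wv4 c $ 3 $ 0 = 0"
  "Wv4 c $ 3 $ 1 = 0"
  "Wv4 c $ 3 $ 2 = 0"
  "Wv4 c $ 3 $ 3 = sin c"
  "Wv4 c $ 3 $ 4 = - cos c"
  "Wv4 c $ 3 $ 5 = - 1"
  "Wv4 c $ 4 $ 0 = 0"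
  "Wv4 c $ 4 $ 1 = 0"
  "Wv4 c $ 4 $ 2 = 0"
  "Wv4 c $ 4 $ 3 = cos c"
  "Wv4 c $ 4 $ 4 = - sin c"
  "Wv4 c $ 4 $ 5 = - 1"
  "Wv4 c $ 5 $ 0 = 0"
  "Wv4 c $ 5 $ 1 = 1"
  "Wv4 c $ 5 $ 2 = 1"
  "Wv4 c $ 5 $ 3 = 1"
  "Wv4 c $ 5 $ 4 = 1"
  "Wv4 c $ 5 $ 5 = 0"
  by (simp_all add: Wv4_def mat6_def pos6_simps)




lemma nl00: "\<not> (0::6) < 0" by (simp add: less_bit0_def bit0.Rep_numeral bit0.Rep_0 bit0.Rep_1)
lemma nl10: "\<not> (1::6) < 0" by (simp add: less_bit0_def bit0.Rep_numeral bit0.Rep_0 bit0.Rep_1)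
lemma nl11: "\<not> (1::6) < 1" by (simp add: less_bit0_def bit0.Rep_numeral bit0.Rep_0 bit0.Rep_1)
lemma nl20: "\<not> (2::6) < 0" by (simp add: less_bit0_def bit0.Rep_numeral bit0.Rep_0 bit0.Rep_1)
lemma nl21: "\<not> (2::6) < 1" by (simp add: less_bit0_def bit0.Rep_numeral bit0.Rep_0 bit0.Rep_1)
lemma nl22: "\<not> (2::6) < 2" by (simp add: less_bit0_def bit0.Rep_numeral bit0.Rep_0 bit0.Rep_1)
lemma nl30: "\<not> (3::6) < 0" by (simp add: less_bit0_def bit0.Rep_numeral bit0.Rep_0 bit0.Rep_1)
lemma nl31: "\<not> (3::6) < 1" by (simp add: less_bit0_def bit0.Rep_numeral bit0.Rep_0 bit0.Rep_1)
lemma nl32: "\<not> (3::6) < 2" by (simp add: less_bit0_def bit0.Rep_numeral bit0.Rep_0 bit0.Rep_1)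
lemma nl33: "\<not> (3::6) < 3" by (simp add: less_bit0_def bit0.Rep_numeral bit0.Rep_0 bit0.Rep_1)
lemma nl40: "\<not> (4::6) < 0" by (simp add: less_bit0_def bit0.Rep_numeral bit0.Rep_0 bit0.Rep_1)
lemma nl41: "\<not> (4::6) < 1" by (simp add: less_bit0_def bit0.Rep_numeral bit0.Rep_0 bit0.Rep_1)
lemma nl42: "\<not> (4::6) < 2" by (simp add: less_bit0_def bit0.Rep_numeral bit0.Rep_0 bit0.Rep_1)
lemma nl43: "\<not> (4::6) < 3" by (simp add: less_bit0_def bit0.Rep_numeral bit0.Rep_0 bit0.Rep_1)
lemma nl44: "\<not> (4::6) < 4" by (simp add: less_bit0_def bit0.Rep_numeral bit0.Rep_0 bit0.Rep_1)
lemma nl50: "\<not> (5::6) < 0" by (simp add: less_bit0_def bit0.Rep_numeral bit0.Rep_0 bit0.Rep_1)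
lemma nl51: "\<not> (5::6) < 1" by (simp add: less_bit0_def bit0.Rep_numeral bit0.Rep_0 bit0.Rep_1)
lemma nl52: "\<not> (5::6) < 2" by (simp add: less_bit0_def bit0.Rep_numeral bit0.Rep_0 bit0.Rep_1)
lemma nl53: "\<not> (5::6) < 3" by (simp add: less_bit0_def bit0.Rep_numeral bit0.Rep_0 bit0.Rep_1)
lemma nl54: "\<not> (5::6) < 4" by (simp add: less_bit0_def bit0.Rep_numeral bit0.Rep_0 bit0.Rep_1)
lemma nl55: "\<not> (5::6) < 5" by (simp add: less_bit0_def bit0.Rep_numeral bit0.Rep_0 bit0.Rep_1)

definition defeq :: "real \<Rightarrow> real^6^6 \<Rightarrow> 6 \<Rightarrow> 6 \<Rightarrow> bool" where
  "defeq c R i j \<longleftrightarrow> (\<Sum>k\<in>UNIV. D6_1 c $ i $ k * cnj (D6_1 c $ j $ k) * complex_of_real (R $ i $ k - R $ j $ k)) = 0"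

definition SS :: "real \<Rightarrow> (real^6^6) set" where
  "SS c = {R :: real^6^6.
      (\<forall>i. R $ i $ first_idx = 0) \<and>
      (\<forall>j. j \<noteq> first_idx \<longrightarrow> R $ first_idx $ j = 0) \<and>
      (\<forall>i j. i < j \<longrightarrow>
         (\<Sum>k\<in>UNIV. D6_1 c $ i $ k * cnj (D6_1 c $ j $ k) * complex_of_real (R $ i $ k - R $ j $ k)) = 0)}"

lemma defect_SS: "defect (D6_1 c) = dim (SS c)"
  by (simp add: defect_def SS_def)

lemma SS_iff: "R \<in> SS c \<longleftrightarrow> (\<forall>i. R $ i $ 0 = 0) \<and> (\<forall>j. R $ 0 $ j = 0) \<and>
     defeq c R 0 1 \<and>
     defeq c R 0 2 \<and>
     defeq c R 0 3 \<and>
     defeq c R 0 4 \<and>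
     defeq c R 0 5 \<and>
     defeq c R 1 2 \<and>
     defeq c R 1 3 \<and>
     defeq c R 1 4 \<and>
     defeq c R 1 5 \<and>
     defeq c R 2 3 \<and>
     defeq c R 2 4 \<and>
     defeq c R 2 5 \<and>
     defeq c R 3 4 \<and>
     defeq c R 3 5 \<and>
     defeq c R 4 5"
proof -
  have A: "(\<forall>i j. i < j \<longrightarrow> (\<Sum>k\<in>UNIV. D6_1 c $ i $ k * cnj (D6_1 c $ j $ k) * complex_of_real (R $ i $ k - R $ j $ k)) = 0)
     \<longleftrightarrow> (\<forall>i j. i < j \<longrightarrow> defeq c R i j)" by (simp add: defeq_def)
  show ?thesis unfolding SS_def mem_Collect_eq first6 A
    unfolding all6 by (auto simp: l01 l02 l03 l04 l05 l12 l13 l14 l15 l23 l24 l25 l34 l35 l45 nl00 nl10 nl11 nl20 nl21 nl22 nl30 nl31 nl32 nl33 nl40 nl41 nl42 nl43 nl44 nl50 nl51 nl52 nl53 nl54 nl55)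
qed

lemma ReIm0: "Re z = 0 \<Longrightarrow> Im z = 0 \<Longrightarrow> z = 0" by (simp add: complex_eq_iff)

lemma W0_mem: "W0 \<in> SS c"
  unfolding SS_iff defeq_def
  by (intro conjI; (simp only: all6)?; (intro ReIm0)?; simp add: sum6 H_entries W0_ent)

lemma Wu2_mem: "Wu2 c \<in> SS c"
  unfolding SS_iff
proof (intro conjI)
  note py = sin_cos_squared_add[of c]
  show "\<forall>i. Wu2 c $ i $ 0 = 0" by (simp add: all6 Wu2_ent)
  show "\<forall>i. Wu2 c $ 0 $ i = 0" by (simp add: all6 Wu2_ent)
  show "defeq c (Wu2 c) 0 1" unfolding defeq_def
    by (rule ReIm0; simp add: sum6 H_entries Wu2_ent; ((simp add: algebra_simps; fail)| (use py in algebra)))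
  show "defeq c (Wu2 c) 0 2" unfolding defeq_def
    by (rule ReIm0; simp add: sum6 H_entries Wu2_ent; ((simp add: algebra_simps; fail)| (use py in algebra)))
  show "defeq c (Wu2 c) 0 3" unfolding defeq_def
    by (rule ReIm0; simp add: sum6 H_entries Wu2_ent; ((simp add: algebra_simps; fail)| (use py in algebra)))
  show "defeq c (Wu2 c) 0 4" unfolding defeq_def
    by (rule ReIm0; simp add: sum6 H_entries Wu2_ent; ((simp add: algebra_simps; fail)| (use py in algebra)))
  show "defeq c (Wu2 c) 0 5" unfolding defeq_def
    by (rule ReIm0; simp add: sum6 H_entries Wu2_ent; ((simp add: algebra_simps; fail)| (use py in algebra)))
  show "defeq c (Wu2 c) 1 2" unfolding defeq_def
    by (rule ReIm0; simp add: sum6 H_entries Wu2_ent; ((simp add: algebra_simps; fail)| (use py in algebra)))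
  show "defeq c (Wu2 c) 1 3" unfolding defeq_def
    by (rule ReIm0; simp add: sum6 H_entries Wu2_ent; ((simp add: algebra_simps; fail)| (use py in algebra)))
  show "defeq c (Wu2 c) 1 4" unfolding defeq_def
    by (rule ReIm0; simp add: sum6 H_entries Wu2_ent; ((simp add: algebra_simps; fail)| (use py in algebra)))
  show "defeq c (Wu2 c) 1 5" unfolding defeq_def
    by (rule ReIm0; simp add: sum6 H_entries Wu2_ent; ((simp add: algebra_simps; fail)| (use py in algebra)))
  show "defeq c (Wu2 c) 2 3" unfolding defeq_def
    by (rule ReIm0; simp add: sum6 H_entries Wu2_ent; ((simp add: algebra_simps; fail)| (use py in algebra)))
  show "defeq c (Wu2 c) 2 4" unfolding defeq_def
    by (rule ReIm0; simp add: sum6 H_entries Wu2_ent; ((simp add: algebra_simps; fail)| (use py in algebra)))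
  show "defeq c (Wu2 c) 2 5" unfolding defeq_def
    by (rule ReIm0; simp add: sum6 H_entries Wu2_ent; ((simp add: algebra_simps; fail)| (use py in algebra)))
  show "defeq c (Wu2 c) 3 4" unfolding defeq_def
    by (rule ReIm0; simp add: sum6 H_entries Wu2_ent; ((simp add: algebra_simps; fail)| (use py in algebra)))
  show "defeq c (Wu2 c) 3 5" unfolding defeq_def
    by (rule ReIm0; simp add: sum6 H_entries Wu2_ent; ((simp add: algebra_simps; fail)| (use py in algebra)))
  show "defeq c (Wu2 c) 4 5" unfolding defeq_def
    by (rule ReIm0; simp add: sum6 H_entries Wu2_ent; ((simp add: algebra_simps; fail)| (use py in algebra)))
qed

lemma Wu5_mem: "Wu5 c \<in> SS c"
  unfolding SS_iff
proof (intro conjI)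
  note py = sin_cos_squared_add[of c]
  show "\<forall>i. Wu5 c $ i $ 0 = 0" by (simp add: all6 Wu5_ent)
  show "\<forall>i. Wu5 c $ 0 $ i = 0" by (simp add: all6 Wu5_ent)
  show "defeq c (Wu5 c) 0 1" unfolding defeq_def
    by (rule ReIm0; simp add: sum6 H_entries Wu5_ent; ((simp add: algebra_simps; fail)| (use py in algebra)))
  show "defeq c (Wu5 c) 0 2" unfolding defeq_def
    by (rule ReIm0; simp add: sum6 H_entries Wu5_ent; ((simp add: algebra_simps; fail)| (use py in algebra)))
  show "defeq c (Wu5 c) 0 3" unfolding defeq_def
    by (rule ReIm0; simp add: sum6 H_entries Wu5_ent; ((simp add: algebra_simps; fail)| (use py in algebra)))
  show "defeq c (Wu5 c) 0 4" unfolding defeq_def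
    by (rule ReIm0; simp add: sum6 H_entries Wu5_ent; ((simp add: algebra_simps; fail)| (use py in algebra)))
  show "defeq c (Wu5 c) 0 5" unfolding defeq_def
    by (rule ReIm0; simp add: sum6 H_entries Wu5_ent; ((simp add: algebra_simps; fail)| (use py in algebra)))
  show "defeq c (Wu5 c) 1 2" unfolding defeq_def
    by (rule ReIm0; simp add: sum6 H_entries Wu5_ent; ((simp add: algebra_simps; fail)| (use py in algebra)))
  show "defeq c (Wu5 c) 1 3" unfolding defeq_def
    by (rule ReIm0; simp add: sum6 H_entries Wu5_ent; ((simp add: algebra_simps; fail)| (use py in algebra)))
  show "defeq c (Wu5 c) 1 4" unfolding defeq_def
    by (rule ReIm0; simp add: sum6 H_entries Wu5_ent; ((simp add: algebra_simps; fail)| (use py in algebra)))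
  show "defeq c (Wu5 c) 1 5" unfolding defeq_def
    by (rule ReIm0; simp add: sum6 H_entries Wu5_ent; ((simp add: algebra_simps; fail)| (use py in algebra)))
  show "defeq c (Wu5 c) 2 3" unfolding defeq_def
    by (rule ReIm0; simp add: sum6 H_entries Wu5_ent; ((simp add: algebra_simps; fail)| (use py in algebra)))
  show "defeq c (Wu5 c) 2 4" unfolding defeq_def
    by (rule ReIm0; simp add: sum6 H_entries Wu5_ent; ((simp add: algebra_simps; fail)| (use py in algebra)))
  show "defeq c (Wu5 c) 2 5" unfolding defeq_def
    by (rule ReIm0; simp add: sum6 H_entries Wu5_ent; ((simp add: algebra_simps; fail)| (use py in algebra)))
  show "defeq c (Wu5 c) 3 4" unfolding defeq_def
    by (rule ReIm0; simp add: sum6 H_entries Wu5_ent; ((simp add: algebra_simps; fail)| (use py in algebra)))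
  show "defeq c (Wu5 c) 3 5" unfolding defeq_def
    by (rule ReIm0; simp add: sum6 H_entries Wu5_ent; ((simp add: algebra_simps; fail)| (use py in algebra)))
  show "defeq c (Wu5 c) 4 5" unfolding defeq_def
    by (rule ReIm0; simp add: sum6 H_entries Wu5_ent; ((simp add: algebra_simps; fail)| (use py in algebra)))
qed

lemma Wv4_mem: "Wv4 c \<in> SS c"
  unfolding SS_iff
proof (intro conjI)
  note py = sin_cos_squared_add[of c]
  show "\<forall>i. Wv4 c $ i $ 0 = 0" by (simp add: all6 Wv4_ent)
  show "\<forall>i. Wv4 c $ 0 $ i = 0" by (simp add: all6 Wv4_ent)
  show "defeq c (Wv4 c) 0 1" unfolding defeq_def
    by (rule ReIm0; simp add: sum6 H_entries Wv4_ent; ((simp add: algebra_simps; fail)| (use py in algebra)))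
  show "defeq c (Wv4 c) 0 2" unfolding defeq_def
    by (rule ReIm0; simp add: sum6 H_entries Wv4_ent; ((simp add: algebra_simps; fail)| (use py in algebra)))
  show "defeq c (Wv4 c) 0 3" unfolding defeq_def
    by (rule ReIm0; simp add: sum6 H_entries Wv4_ent; ((simp add: algebra_simps; fail)| (use py in algebra)))
  show "defeq c (Wv4 c) 0 4" unfolding defeq_def
    by (rule ReIm0; simp add: sum6 H_entries Wv4_ent; ((simp add: algebra_simps; fail)| (use py in algebra)))
  show "defeq c (Wv4 c) 0 5" unfolding defeq_def
    by (rule ReIm0; simp add: sum6 H_entries Wv4_ent; ((simp add: algebra_simps; fail)| (use py in algebra)))
  show "defeq c (Wv4 c) 1 2" unfolding defeq_def
    by (rule ReIm0; simp add: sum6 H_entries Wv4_ent; ((simp add: algebra_simps; fail)| (use py in algebra)))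
  show "defeq c (Wv4 c) 1 3" unfolding defeq_def
    by (rule ReIm0; simp add: sum6 H_entries Wv4_ent; ((simp add: algebra_simps; fail)| (use py in algebra)))
  show "defeq c (Wv4 c) 1 4" unfolding defeq_def
    by (rule ReIm0; simp add: sum6 H_entries Wv4_ent; ((simp add: algebra_simps; fail)| (use py in algebra)))
  show "defeq c (Wv4 c) 1 5" unfolding defeq_def
    by (rule ReIm0; simp add: sum6 H_entries Wv4_ent; ((simp add: algebra_simps; fail)| (use py in algebra)))
  show "defeq c (Wv4 c) 2 3" unfolding defeq_def
    by (rule ReIm0; simp add: sum6 H_entries Wv4_ent; ((simp add: algebra_simps; fail)| (use py in algebra)))
  show "defeq c (Wv4 c) 2 4" unfolding defeq_def
    by (rule ReIm0; simp add: sum6 H_entries Wv4_ent; ((simp add: algebra_simps; fail)| (use py in algebra)))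
  show "defeq c (Wv4 c) 2 5" unfolding defeq_def
    by (rule ReIm0; simp add: sum6 H_entries Wv4_ent; ((simp add: algebra_simps; fail)| (use py in algebra)))
  show "defeq c (Wv4 c) 3 4" unfolding defeq_def
    by (rule ReIm0; simp add: sum6 H_entries Wv4_ent; ((simp add: algebra_simps; fail)| (use py in algebra)))
  show "defeq c (Wv4 c) 3 5" unfolding defeq_def
    by (rule ReIm0; simp add: sum6 H_entries Wv4_ent; ((simp add: algebra_simps; fail)| (use py in algebra)))
  show "defeq c (Wv4 c) 4 5" unfolding defeq_def
    by (rule ReIm0; simp add: sum6 H_entries Wv4_ent; ((simp add: algebra_simps; fail)| (use py in algebra)))
qed

lemma kernel:
  fixes R :: "real^6^6"
  assumes "\<forall>i j. i < j \<longrightarrow> (\<Sum>k\<in>UNIV. D6_1 c $ i $ k * cnj (D6_1 c $ j $ k) * complex_of_real (R $ i $ k - R $ j $ k)) = 0"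
    and "\<forall>i. R $ i $ 0 = 0" and "\<forall>j. R $ 0 $ j = 0"
    and p1: "R $ 2 $ 3 = 0" and p2: "R $ 2 $ 3 - R $ 2 $ 4 = 0" and p3: "R $ 5 $ 3 - R $ 5 $ 4 = 0" and p4: "R $ 4 $ 2 - R $ 4 $ 5 = 0"
  shows "R = 0"
proof -
  have z: "R $ i $ 0 = 0" "R $ 0 $ i = 0" for i using assms(2,3) by auto
  note e01r = eqRe[OF assms(1)[rule_format, OF l01], unfolded sum6, simplified, simplified H_entries z, simplified]
  note e01i = eqIm[OF assms(1)[rule_format, OF l01], unfolded sum6, simplified, simplified H_entries z, simplified]
  note e02r = eqRe[OF assms(1)[rule_format, OF l02], unfolded sum6, simplified, simplified H_entries z, simplified]
  note e02i = eqIm[OF assms(1)[rule_format, OF l02], unfolded sum6, simplified, simplified H_entries z, simplified]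
  note e03r = eqRe[OF assms(1)[rule_format, OF l03], unfolded sum6, simplified, simplified H_entries z, simplified]
  note e03i = eqIm[OF assms(1)[rule_format, OF l03], unfolded sum6, simplified, simplified H_entries z, simplified]
  note e04r = eqRe[OF assms(1)[rule_format, OF l04], unfolded sum6, simplified, simplified H_entries z, simplified]
  note e04i = eqIm[OF assms(1)[rule_format, OF l04], unfolded sum6, simplified, simplified H_entries z, simplified]
  note e05r = eqRe[OF assms(1)[rule_format, OF l05], unfolded sum6, simplified, simplified H_entries z, simplified]
  note e05i = eqIm[OF assms(1)[rule_format, OF l05], unfolded sum6, simplified, simplified H_entries z, simplified]
  note e12r = eqRe[OF assms(1)[rule_format, OF l12], unfolded sum6, simplified, simplified H_entries z, simplified]
  note e12i = eqIm[OF assms(1)[rule_format, OF l12], unfolded sum6, simplified, simplified H_entries z, simplified]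
  note e13r = eqRe[OF assms(1)[rule_format, OF l13], unfolded sum6, simplified, simplified H_entries z, simplified]
  note e13i = eqIm[OF assms(1)[rule_format, OF l13], unfolded sum6, simplified, simplified H_entries z, simplified]
  note e14r = eqRe[OF assms(1)[rule_format, OF l14], unfolded sum6, simplified, simplified H_entries z, simplified]
  note e14i = eqIm[OF assms(1)[rule_format, OF l14], unfolded sum6, simplified, simplified H_entries z, simplified]
  note e15r = eqRe[OF assms(1)[rule_format, OF l15], unfolded sum6, simplified, simplified H_entries z, simplified]
  note e15i = eqIm[OF assms(1)[rule_format, OF l15], unfolded sum6, simplified, simplified H_entries z, simplified]
  note e23r = eqRe[OF assms(1)[rule_format, OF l23], unfolded sum6, simplified, simplified H_entries z, simplified]
  note e23i = eqIm[OF assms(1)[rule_format, OF l23], unfolded sum6, simplified, simplified H_entries z, simplified]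
  note e24r = eqRe[OF assms(1)[rule_format, OF l24], unfolded sum6, simplified, simplified H_entries z, simplified]
  note e24i = eqIm[OF assms(1)[rule_format, OF l24], unfolded sum6, simplified, simplified H_entries z, simplified]
  note e25r = eqRe[OF assms(1)[rule_format, OF l25], unfolded sum6, simplified, simplified H_entries z, simplified]
  note e25i = eqIm[OF assms(1)[rule_format, OF l25], unfolded sum6, simplified, simplified H_entries z, simplified]
  note e34r = eqRe[OF assms(1)[rule_format, OF l34], unfolded sum6, simplified, simplified H_entries z, simplified]
  note e34i = eqIm[OF assms(1)[rule_format, OF l34], unfolded sum6, simplified, simplified H_entries z, simplified]
  note e35r = eqRe[OF assms(1)[rule_format, OF l35], unfolded sum6, simplified, simplified H_entries z, simplified]
  note e35i = eqIm[OF assms(1)[rule_format, OF l35], unfolded sum6, simplified, simplified H_entries z, simplified]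
  note e45r = eqRe[OF assms(1)[rule_format, OF l45], unfolded sum6, simplified, simplified H_entries z, simplified]
  note e45i = eqIm[OF assms(1)[rule_format, OF l45], unfolded sum6, simplified, simplified H_entries z, simplified]


  note py = sin_cos_squared_add[of c]
  have s1: "R$1$1 = 0" using e01r .
  have s2: "R$2$4 = 0" using p1 p2 by simp
  have s3: "R$2$2 = 0" using e02r p1 s2 by simp
  have s4: "R$2$5 = R$2$1" using e02i p1 s2 by simp
  have s5: "R$5$4 = R$5$3" using p3 by simp
  have s6: "R$5$5 = 0" using e05r s5 by simp
  have s7: "R$5$2 = R$5$1" using e05i s5 by simp
  have s8: "R$4$5 = R$4$2" using p4 by simp
  have s9: "R$4$4 = 0" using e04r s8 by simp
  have s10: "R$4$3 = R$4$1" using e04i s8 by simp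
  have s11: "R$5$1 = - R$2$1" using e25i s3 s4 s6 s7 by simp
  have s12: "R$5$3 = - R$2$1" using e25r p1 s2 s5 s11 py by algebra
  have s13: "R$4$1 * (3 + cos c - sin c) = 0"
    using e24r e24i e45r e45i s2 p1 s3 s4 s7 s8 s9 s10 s11 s12 s5 s6 py by algebra
  have pos1: "3 + cos c - sin c \<noteq> 0" using cos_ge_minus_one[of c] sin_le_one[of c] by linarith
  have s14: "R$4$1 = 0" using s13 pos1 by simp
  have s15: "R$2$1 = 0"
    using e24r e24i e45r e45i s2 p1 s3 s4 s7 s8 s9 s10 s11 s12 s5 s6 s14 py by algebra
  have s16: "R$4$2 = 0"
    using e24r e24i e45r e45i s2 p1 s3 s4 s7 s8 s9 s10 s11 s12 s5 s6 s14 s15 py by algebra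
  have s17: "R$1$2 * (1 + 4 * cos c ^ 2) = 0"
    using e01i e12r e12i e15r e15i e14r e14i s1 s2 p1 s3 s4 s5 s6 s7 s8 s9 s10 s11 s12 s14 s15 s16 py by algebra
  have pos2: "1 + 4 * cos c ^ 2 \<noteq> 0" by (smt (verit) zero_le_power2)
  have s18: "R$1$2 = 0" using s17 pos2 by simp
  have s19: "R$1$3 = 0" "R$1$4 = 0" "R$1$5 = 0"
    using e01i e12r e12i e15r e15i e14r e14i s1 s2 p1 s3 s4 s5 s6 s7 s8 s9 s10 s11 s12 s14 s15 s16 s18 py by algebra+
  have s20: "R$3$3 = 0"
    using e03r e03i e13r e13i e34r e34i e23r e23i s1 s2 p1 s3 s4 s5 s6 s7 s8 s9 s10 s11 s12 s14 s15 s16 s18 s19 py by algebra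
  have s21: "R$3$1 = 0" "R$3$2 = 0" "R$3$4 = 0" "R$3$5 = 0"
    using e03r e03i e13r e13i e34r e34i e23r e23i s1 s2 p1 s3 s4 s5 s6 s7 s8 s9 s10 s11 s12 s14 s15 s16 s18 s19 s20 py by algebra+
  have "\<forall>i j. R $ i $ j = 0"
    unfolding all6 using z s1 s2 p1 s3 s4 s5 s6 s7 s8 s9 s10 s11 s12 s14 s15 s16 s18 s19 s20 s21 by simp
  then show ?thesis by (simp add: vec_eq_iff)

qed

lemma kernel_SS:
  assumes "R \<in> SS c" "R $ 2 $ 3 = 0" "R $ 2 $ 3 - R $ 2 $ 4 = 0" "R $ 5 $ 3 - R $ 5 $ 4 = 0" "R $ 4 $ 2 - R $ 4 $ 5 = 0"
  shows "R = 0"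
proof (rule kernel[of c R])
  show "\<forall>i j. i < j \<longrightarrow> (\<Sum>k\<in>UNIV. D6_1 c $ i $ k * cnj (D6_1 c $ j $ k) * complex_of_real (R $ i $ k - R $ j $ k)) = 0"
    using assms(1) unfolding SS_def by simp
  show z1: "\<forall>i. R $ i $ 0 = 0" using assms(1) unfolding SS_def first6 by simp
  show "\<forall>j. R $ 0 $ j = 0"
  proof
    fix j :: 6
    show "R $ 0 $ j = 0"
    proof (cases "j = 0")
      case True then show ?thesis using z1 by simp
    next
      case False then show ?thesis using assms(1) unfolding SS_def first6 by simp
    qed
  qed
qed (use assms in auto)

lemma sum_lin_add: "(\<Sum>k\<in>UNIV. A k * complex_of_real ((x + y) $ i $ k - (x + y) $ j $ k)) =
   (\<Sum>k\<in>UNIV. A k * complex_of_real (x $ i $ k - x $ j $ k)) + (\<Sum>k\<in>UNIV. A k * complex_of_real (y $ i $ k - y $ j $ k))"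
  unfolding sum.distrib[symmetric] by (rule sum.cong) (simp_all add: algebra_simps)

lemma sum_lin_scale: "(\<Sum>k\<in>UNIV. A k * complex_of_real ((a *\<^sub>R x) $ i $ k - (a *\<^sub>R x) $ j $ k)) =
   complex_of_real a * (\<Sum>k\<in>UNIV. A k * complex_of_real (x $ i $ k - x $ j $ k))"
  unfolding sum_distrib_left by (rule sum.cong) (simp_all add: algebra_simps)

lemma SS_subspace: "subspace (SS c)"
  unfolding subspace_def
proof (intro conjI ballI allI)
  show "0 \<in> SS c" unfolding SS_def by simp
next
  fix x y assume x: "x \<in> SS c" and y: "y \<in> SS c"
  have "\<forall>i j. i < j \<longrightarrow> (\<Sum>k\<in>UNIV. D6_1 c $ i $ k * cnj (D6_1 c $ j $ k) * complex_of_real ((x + y) $ i $ k - (x + y) $ j $ k)) = 0"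
  proof (intro allI impI)
    fix i j :: 6 assume "i < j"
    then show "(\<Sum>k\<in>UNIV. D6_1 c $ i $ k * cnj (D6_1 c $ j $ k) * complex_of_real ((x + y) $ i $ k - (x + y) $ j $ k)) = 0"
      using x y unfolding SS_def
      by (simp only: sum_lin_add[of "\<lambda>k. D6_1 c $ i $ k * cnj (D6_1 c $ j $ k)"] mem_Collect_eq) simp
  qed
  then show "x + y \<in> SS c" using x y unfolding SS_def by simp
next
  fix a :: real and x assume x: "x \<in> SS c"
  have "\<forall>i j. i < j \<longrightarrow> (\<Sum>k\<in>UNIV. D6_1 c $ i $ k * cnj (D6_1 c $ j $ k) * complex_of_real ((a *\<^sub>R x) $ i $ k - (a *\<^sub>R x) $ j $ k)) = 0"
  proof (intro allI impI)
    fix i j :: 6 assume "i < j"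
    then show "(\<Sum>k\<in>UNIV. D6_1 c $ i $ k * cnj (D6_1 c $ j $ k) * complex_of_real ((a *\<^sub>R x) $ i $ k - (a *\<^sub>R x) $ j $ k)) = 0"
      using x unfolding SS_def
      by (simp only: sum_lin_scale[of "\<lambda>k. D6_1 c $ i $ k * cnj (D6_1 c $ j $ k)"] mem_Collect_eq) simp
  qed
  then show "a *\<^sub>R x \<in> SS c" using x unfolding SS_def by simp
qed

definition phi :: "real^6^6 \<Rightarrow> real \<times> real \<times> real \<times> real" where
  "phi R = (R$2$3, R$2$3 - R$2$4, R$5$3 - R$5$4, R$4$2 - R$4$5)"

lemma phi_linear: "linear phi"
  by (rule linearI) (simp_all add: phi_def algebra_simps)

lemma dim_SS: "dim (SS c) = 4"
proof -
  have sub: "subspace (SS c)" by (rule SS_subspace)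
  have sp: "span (SS c) = SS c" using sub by (simp add: span_eq_iff)
  have inj: "inj_on phi (span (SS c))"
    unfolding sp
  proof (rule inj_onI)
    fix x y assume x: "x \<in> SS c" and y: "y \<in> SS c" and e: "phi x = phi y"
    have m: "x - y \<in> SS c" using sub x y by (rule subspace_diff)
    have "phi (x - y) = 0" using e linear_diff[OF phi_linear] by simp
    then have "x - y = 0" using m by (intro kernel_SS[of "x - y" c]) (auto simp: phi_def zero_prod_def)
    then show "x = y" by simp
  qed
  have img: "phi ` SS c = UNIV"
  proof (rule set_eqI, rule iffI)
    fix p :: "real \<times> real \<times> real \<times> real"
    obtain a b d e where p: "p = (a, b, d, e)" by (cases p) auto
    let ?R = "a *\<^sub>R W0 + b *\<^sub>R Wu2 c + d *\<^sub>R Wu5 c + e *\<^sub>R Wv4 c"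
    have "?R \<in> SS c"
      by (intro subspace_add[OF sub] subspace_scale[OF sub] W0_mem Wu2_mem Wu5_mem Wv4_mem)
    moreover have "phi ?R = p" unfolding p phi_def by (simp add: W0_ent Wu2_ent Wu5_ent Wv4_ent)
    ultimately show "p \<in> phi ` SS c" by (metis image_eqI)
  qed simp
  have "dim (SS c) = dim (phi ` SS c)" using dim_image_eq[OF phi_linear inj] by simp
  also have "\<dots> = 4" unfolding img by simp
  finally show ?thesis .
qed


lemma had: "complex_hadamard (D6_1 c)"
  unfolding complex_hadamard_def
proof
  note py = sin_cos_squared_add[of c]
  show "\<forall>i j. cmod (D6_1 c $ i $ j) = 1" unfolding all6 by (simp add: cmod_def H_entries)
  show "D6_1 c ** conj_transpose (D6_1 c) = mat (of_nat CARD(6))"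
    unfolding vec_eq_iff all6
    by (intro conjI; simp only: matrix_matrix_mult_def conj_transpose_def mat_def vec_lambda_beta;
        rule complex_eqI; simp add: sum6 H_entries; ((simp add: algebra_simps; fail) | (use py in algebra)))
qed

theorem mainTheorem2:
  fixes c :: real
  shows "complex_hadamard (D6_1 c) \<and> defect (D6_1 c) = 4"
  using had[of c] dim_SS[of c] defect_SS[of c] by simp

end
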